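(* Consider Algorithm NCB run with inputs $k\ge2$ and $T$ on an instance with $\mu^*\ge\frac{32\sqrt{k\log k\log T}}{\sqrt T}$. On the event $G$, no arm $j$ with $\mu_j\le\frac{6\sqrt{k\log k\log T}}{\sqrt T}$ is pulled in any round of Phase II.
   Context: Bandit setup: $k$ arms, arm $i$ a distribution on $[0,1]$ with mean $\mu_i$, $\mu^*:=\max_i\mu_i$. $\log$ is the natural logarithm. Canonical model: a $k\times T$ table $(Y_{i,s})$ of independent entries with $Y_{i,s}$ distributed as arm $i$; the $s$-th pull of arm $i$ yields $Y_{i,s}$. Let $\widehat\mu_{i,s}:=\frac1s\sum_{r=1}^sY_{i,r}$. Algorithm NCB (inputs $k,T$): $\widetilde T:=16\sqrt{\frac{kT\log T}{\log k}}$. Phase I: in each round $t\le\widetilde T$ pull a uniformly random arm. Phase II: in each round $\widetilde T<t\le T$ pull an arm maximizing $\mathrm{NCB}_i:=\widehat\mu_i+4\sqrt{\widehat\mu_i\log T/n_i}$, where $n_i$ is the number of pulls of $i$ before the round and $\widehat\mu_i$ its empirical mean (ties arbitrary). Events: $G_1$: every arm is pulled at least $\frac{\widetilde T}{2k}$ times in Phase I. $G_2$: for every arm $i$ with $\mu_i>\frac{6\sqrt{k\log k\log T}}{\sqrt T}$ and every integer $s$ with $\frac{\widetilde T}{2k}\le s\le T$, $|\mu_i-\widehat\mu_{i,s}|\le 3\sqrt{\frac{\mu_i\log T}{s}}$. $G_3$: for every arm $j$ with $\mu_j\le\frac{6\sqrt{k\log k\log T}}{\sqrt T}$ and every integer $s$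 with $\frac{\widetilde T}{2k}\le s\le T$, $\widehat\mu_{j,s}\le \frac{9\sqrt{k\log k\log T}}{\sqrt T}$. $G:=G_1\cap G_2\cap G_3$. *)

theory Defs
  imports Complex_Main
begin

text \<open>Arms are indexed by 0..<k; rounds by 1..T. Y i s is the s-th sample of arm i (s \<ge> 1).
  A run of the algorithm is recorded as the function a : round \<Rightarrow> arm pulled.\<close>

definition muhat :: "(nat \<Rightarrow> nat \<Rightarrow> real) \<Rightarrow> nat \<Rightarrow> nat \<Rightarrow> real" where
  "muhat Y i s = (\<Sum>r=1..s. Y i r) / real s"

definition npulls :: "(nat \<Rightarrow> nat) \<Rightarrow> nat \<Rightarrow> nat \<Rightarrow> nat" where
  "npulls a i t = card {u. 1 \<le> u \<and> u < t \<and> a u = i}"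

definition Ttilde :: "nat \<Rightarrow> nat \<Rightarrow> real" where
  "Ttilde k T = 16 * sqrt (real k * real T * ln (real T) / ln (real k))"

definition ncb_index :: "nat \<Rightarrow> (nat \<Rightarrow> nat \<Rightarrow> real) \<Rightarrow> (nat \<Rightarrow> nat) \<Rightarrow> nat \<Rightarrow> nat \<Rightarrow> real" where
  "ncb_index T Y a i t =
     (let n = npulls a i t; m = muhat Y i n in m + 4 * sqrt (m * ln (real T) / real n))"

text \<open>a is a possible run of NCB with inputs k, T on sample table Y: in Phase I an arbitrary
  (random) arm is pulled; in Phase II an arm maximizing the NCB index (ties arbitrary).\<close>
definition NCB_run :: "nat \<Rightarrow> nat \<Rightarrow> (nat \<Rightarrow> nat \<Rightarrow> real) \<Rightarrow> (nat \<Rightarrow> nat) \<Rightarrow> bool" where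
  "NCB_run k T Y a \<longleftrightarrow>
     (\<forall>t. 1 \<le> t \<and> t \<le> T \<longrightarrow> a t < k) \<and>
     (\<forall>t. 1 \<le> t \<and> t \<le> T \<and> real t > Ttilde k T \<longrightarrow>
         (\<forall>i<k. ncb_index T Y a i t \<le> ncb_index T Y a (a t) t))"

definition thr :: "nat \<Rightarrow> nat \<Rightarrow> real" where
  "thr k T = sqrt (real k * ln (real k) * ln (real T)) / sqrt (real T)"

definition G1 :: "nat \<Rightarrow> nat \<Rightarrow> (nat \<Rightarrow> nat) \<Rightarrow> bool" where
  "G1 k T a \<longleftrightarrow> (\<forall>i<k. real (card {t. 1 \<le> t \<and> t \<le> T \<and> real t \<le> Ttilde k T \<and> a t = i})
                        \<ge> Ttilde k T / (2 * real k))"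

definition G2 :: "nat \<Rightarrow> nat \<Rightarrow> (nat \<Rightarrow> real) \<Rightarrow> (nat \<Rightarrow> nat \<Rightarrow> real) \<Rightarrow> bool" where
  "G2 k T \<mu> Y \<longleftrightarrow> (\<forall>i<k. \<mu> i > 6 * thr k T \<longrightarrow>
      (\<forall>s::nat. Ttilde k T / (2 * real k) \<le> real s \<and> s \<le> T \<longrightarrow>
          \<bar>\<mu> i - muhat Y i s\<bar> \<le> 3 * sqrt (\<mu> i * ln (real T) / real s)))"

definition G3 :: "nat \<Rightarrow> nat \<Rightarrow> (nat \<Rightarrow> real) \<Rightarrow> (nat \<Rightarrow> nat \<Rightarrow> real) \<Rightarrow> bool" where
  "G3 k T \<mu> Y \<longleftrightarrow> (\<forall>j<k. \<mu> j \<le> 6 * thr k T \<longrightarrow>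
      (\<forall>s::nat. Ttilde k T / (2 * real k) \<le> real s \<and> s \<le> T \<longrightarrow>
          muhat Y j s \<le> 9 * thr k T))"

end

theory Submission
  imports Defs
begin

lemma key_ratio:
  fixes k T :: nat and s :: real
  assumes "k \<ge> 2" "T \<ge> 2" "Ttilde k T / (2 * real k) \<le> s"
  shows "ln (real T) / s \<le> thr k T / 8"
proof -
  define A where "A = sqrt (real k * real T * ln (real T) / ln (real k))"
  define th where "th = thr k T"
  have lk: "ln (real k) > 0" using assms by simp
  have lT: "ln (real T) > 0" using assms by simp
  have kp: "real k > 0" "real T > 0" using assms by auto
  have Ap: "A > 0" unfolding A_def using lk lT kp by simp
  have thA: "th * A = real k * ln (real T)"
  proof -
    have "th * A = sqrt (real k * ln (real k) * ln (real T) / real T * (real k * real T * ln (real T) / ln (real k)))"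
      unfolding th_def thr_def A_def by (simp add: real_sqrt_mult real_sqrt_divide)
    also have "real k * ln (real k) * ln (real T) / real T * (real k * real T * ln (real T) / ln (real k))
        = (real k * ln (real T))^2" using lk kp by (simp add: field_simps power2_eq_square)
    finally show ?thesis using kp lT by simp
  qed
  have s: "s \<ge> 8 * A / real k" using assms(3) unfolding Ttilde_def A_def[symmetric] by (simp add: field_simps)
  have sp: "s > 0" using s Ap kp by (smt (verit) divide_pos_pos)
  have "ln (real T) / s \<le> ln (real T) / (8 * A / real k)"
    using s Ap kp lT sp by (intro divide_left_mono) auto
  also have "\<dots> = th * A / (8 * A)" using thA kp by (simp add: field_simps)
  also have "\<dots> = th / 8" using Ap by simp
  finally show ?thesis unfolding th_def .
qed

theorem lemma3:
  fixes k T :: nat and \<mu> :: "nat \<Rightarrow> real" and Y :: "nat \<Rightarrow> nat \<Rightarrow> real" and a :: "nat \<Rightarrow> nat"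
  assumes "k \<ge> 2" and "T \<ge> 2"
    and "\<forall>i<k. 0 \<le> \<mu> i \<and> \<mu> i \<le> 1"
    and "\<forall>i<k. \<forall>s\<ge>1. 0 \<le> Y i s \<and> Y i s \<le> 1"
    and "Max (\<mu> ` {..<k}) \<ge> 32 * thr k T"
    and "NCB_run k T Y a"
    and "G1 k T a" and "G2 k T \<mu> Y" and "G3 k T \<mu> Y"
  shows "\<forall>t. 1 \<le> t \<and> t \<le> T \<and> real t > Ttilde k T \<longrightarrow> \<not> (\<mu> (a t) \<le> 6 * thr k T)"
proof (intro allI impI notI)
  fix t assume t: "1 \<le> t \<and> t \<le> T \<and> real t > Ttilde k T" and bad: "\<mu> (a t) \<le> 6 * thr k T"
  define th where "th = thr k T"
  have thp: "th > 0" unfolding th_def thr_def using assms(1,2) by simp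
  have at: "a t < k" using assms(6) t unfolding NCB_run_def by auto
  have ne: "\<mu> ` {..<k} \<noteq> {}" using assms(1) by (auto simp: lessThan_empty_iff)
  obtain b where b: "b < k" "\<mu> b = Max (\<mu> ` {..<k})"
    using Max_in[OF _ ne] by auto
  have mub: "\<mu> b \<ge> 32 * th" using b assms(5) th_def by simp
  have npb: "\<And>i. i < k \<Longrightarrow> Ttilde k T / (2 * real k) \<le> real (npulls a i t) \<and> npulls a i t \<le> T"
  proof -
    fix i assume i: "i < k"
    have sub: "{u. 1 \<le> u \<and> u \<le> T \<and> real u \<le> Ttilde k T \<and> a u = i} \<subseteq> {u. 1 \<le> u \<and> u < t \<and> a u = i}"
      using t by auto
    have fin: "finite {u. 1 \<le> u \<and> u < t \<and> a u = i}" by simp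
    have c1: "card {u. 1 \<le> u \<and> u \<le> T \<and> real u \<le> Ttilde k T \<and> a u = i} \<le> npulls a i t"
      unfolding npulls_def using card_mono[OF fin sub] .
    have "Ttilde k T / (2 * real k) \<le> real (npulls a i t)"
      using assms(7) i c1 unfolding G1_def by (meson of_nat_le_iff order_trans)
    moreover have "npulls a i t \<le> T"
    proof -
      have "{u. 1 \<le> u \<and> u < t \<and> a u = i} \<subseteq> {1..<t}" by auto
      hence "npulls a i t \<le> card {1..<t}" unfolding npulls_def by (intro card_mono) auto
      thus ?thesis using t by (simp only: card_atLeastLessThan) linarith
    qed
    ultimately show "Ttilde k T / (2 * real k) \<le> real (npulls a i t) \<and> npulls a i t \<le> T" by simp
  qed
  define lT where "lT = ln (real T)"
  have lTp: "lT > 0" unfolding lT_def using assms(2) by simp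
  define nj where "nj = npulls a (a t) t"
  define mj where "mj = muhat Y (a t) nj"
  have nj: "Ttilde k T / (2 * real k) \<le> real nj" "nj \<le> T" using npb[OF at] nj_def by auto
  have njp: "real nj > 0"
  proof -
    have "Ttilde k T > 0" unfolding Ttilde_def using assms(1,2) by simp
    moreover have "real k > 0" using assms(1) by simp
    ultimately have "Ttilde k T / (2 * real k) > 0" by simp
    thus ?thesis using nj(1) by linarith
  qed
  have xj: "lT / real nj \<le> th / 8" using key_ratio[OF assms(1,2) nj(1)] lT_def th_def by simp
  have mj: "mj \<le> 9 * th" using assms(9) at bad nj unfolding G3_def mj_def th_def by auto
  have "sqrt (mj * lT / real nj) \<le> sqrt (9 * th * (th / 8))"
  proof (rule real_sqrt_le_mono)
    show "mj * lT / real nj \<le> 9 * th * (th / 8)"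
    proof (cases "mj \<ge> 0")
      case True
      have "mj * lT / real nj = mj * (lT / real nj)" by simp
      also have "\<dots> \<le> 9 * th * (th / 8)" using True mj xj lTp njp
        by (intro mult_mono) auto
      finally show ?thesis .
    next
      case False
      hence "mj * lT / real nj \<le> 0" using lTp njp by (simp add: divide_nonpos_pos mult_nonpos_nonneg)
      moreover have "0 \<le> 9 * th * (th / 8)" using thp by simp
      ultimately show ?thesis by linarith
    qed
  qed
  also have "\<dots> \<le> sqrt (9 * th * th)" using thp by (intro real_sqrt_le_mono) auto
  also have "\<dots> = 3 * th" using thp by (simp add: real_sqrt_mult power2_eq_square[symmetric])
  finally have sj: "sqrt (mj * lT / real nj) \<le> 3 * th" .
  have ncbj: "ncb_index T Y a (a t) t \<le> 21 * th"
    unfolding ncb_index_def Let_def nj_def[symmetric] mj_def[symmetric] lT_def[symmetric]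
    using mj sj by simp
  define nb where "nb = npulls a b t"
  define mb where "mb = muhat Y b nb"
  have nb: "Ttilde k T / (2 * real k) \<le> real nb" "nb \<le> T" using npb[OF b(1)] nb_def by auto
  have xb: "lT / real nb \<le> th / 8" using key_ratio[OF assms(1,2) nb(1)] lT_def th_def by simp
  have xb0: "lT / real nb \<ge> 0" using lTp by simp
  have dev: "\<bar>\<mu> b - mb\<bar> \<le> 3 * sqrt (\<mu> b * lT / real nb)"
    using assms(8) b(1) mub thp nb unfolding G2_def mb_def lT_def th_def by auto
  have "sqrt (\<mu> b * lT / real nb) \<le> sqrt (\<mu> b * (\<mu> b / 256))"
  proof (rule real_sqrt_le_mono)
    have "th / 8 \<le> \<mu> b / 256" using mub by simp
    hence "lT / real nb \<le> \<mu> b / 256" using xb by linarith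
    hence "\<mu> b * (lT / real nb) \<le> \<mu> b * (\<mu> b / 256)" using mub thp by (intro mult_left_mono) auto
    thus "\<mu> b * lT / real nb \<le> \<mu> b * (\<mu> b / 256)" by simp
  qed
  also have "\<dots> = \<mu> b / 16" using mub thp
    by (simp add: real_sqrt_mult real_sqrt_divide)
  finally have "mb \<ge> 13 / 16 * \<mu> b" using dev by linarith
  hence mbb: "mb \<ge> 26 * th" using mub by linarith
  have "sqrt (mb * lT / real nb) \<ge> 0" using mbb thp lTp by simp
  hence ncbb: "ncb_index T Y a b t \<ge> 26 * th"
    unfolding ncb_index_def Let_def nb_def[symmetric] mb_def[symmetric] lT_def[symmetric]
    using mbb by linarith
  have "ncb_index T Y a b t \<le> ncb_index T Y a (a t) t"
    using assms(6) t b(1) unfolding NCB_run_def by auto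
  thus False using ncbj ncbb thp by linarith
qed

end
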